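(* Let $\varphi\in\Phi$ be such that $\mathscr{L}_{\varphi}\neq\emptyset$. Then $\mathscr{L}_{\varphi}$ is uncountable. Moreover, for every non-empty open interval $J\subseteq\mathbb{R}$, the set $\mathscr{L}_{\varphi}^{\ast}\cap J$ is uncountable.
   Context: $\mathscr{L}$ is the set of Liouville numbers (real irrational $\zeta$ such that for every $\eta>0$ there are infinitely many rationals $y/x$, $x\geq1$, with $|\zeta-y/x|\leq x^{-\eta}$). For real $\alpha$, $\Vert\alpha\Vert$ is the distance from $\alpha$ to the nearest integer. $\Phi$ is the set of all non-decreasing functions $\varphi:\mathbb{R}_{\geq 2}\to\mathbb{R}_{\geq 2}$ with $\lim_{x\to\infty}\varphi(x)=\infty$. For $\varphi\in\Phi$, $\mathscr{L}_{\varphi}$ is the set of $\zeta\in\mathscr{L}$ such that for every positive integer $N$ there is an integer $q$ with $2\leq q\leq\varphi(N)$ and $-\log\Vert\zeta q\Vert/\log q\geq N$; $\mathscr{L}_{\varphi}^{\ast}\supseteq\mathscr{L}_{\varphi}$ is the set of $\zeta\in\mathscr{L}$ for which this condition holds for all $N\geq N_0(\zeta)$ (some $N_0$ depending on $\zeta$). *)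

theory Defs
  imports "HOL-Analysis.Analysis"
begin

definition dnint :: "real \<Rightarrow> real" where
  "dnint a = \<bar>a - of_int (round a)\<bar>"

definition Liouville_set :: "real set" where
  "Liouville_set = {\<zeta>::real. \<zeta> \<notin> \<rat> \<and>
     (\<forall>\<eta>>0. infinite {real_of_int y / real_of_int x | (y::int) (x::int).
         x \<ge> 1 \<and> \<bar>\<zeta> - real_of_int y / real_of_int x\<bar> \<le> (real_of_int x) powr (-\<eta>)})}"

definition PhiClass :: "(real \<Rightarrow> real) set" where
  "PhiClass = {\<phi>. (\<forall>x\<ge>2. \<phi> x \<ge> 2) \<and> mono_on {2..} \<phi> \<and> filterlim \<phi> at_top at_top}"

definition good_at :: "(real \<Rightarrow> real) \<Rightarrow> real \<Rightarrow> nat \<Rightarrow> bool" where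
  "good_at \<phi> \<zeta> N \<longleftrightarrow> (\<exists>q::int. 2 \<le> q \<and> real_of_int q \<le> \<phi> (real N) \<and>
       - ln (dnint (\<zeta> * of_int q)) / ln (of_int q) \<ge> real N)"

definition L_phi :: "(real \<Rightarrow> real) \<Rightarrow> real set" where
  "L_phi \<phi> = {\<zeta> \<in> Liouville_set. \<forall>N\<ge>1. good_at \<phi> \<zeta> N}"

definition L_phi_star :: "(real \<Rightarrow> real) \<Rightarrow> real set" where
  "L_phi_star \<phi> = {\<zeta> \<in> Liouville_set. \<exists>N0. \<forall>N\<ge>N0. good_at \<phi> \<zeta> N}"

end

theory Submission
  imports Defs
begin


lemma uncountable_nat_bool: "uncountable (UNIV :: (nat \<Rightarrow> bool) set)"
proof
  assume "countable (UNIV :: (nat \<Rightarrow> bool) set)"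
  then obtain f :: "nat \<Rightarrow> (nat \<Rightarrow> bool)" where f: "range f = UNIV"
    by (metis uncountable_def UNIV_not_empty)
  define g where "g n = (\<not> f n n)" for n
  have "g \<in> range f" using f by simp
  then obtain n where "g = f n" by auto
  then show False using g_def by metis
qed

lemma dnint_le: "dnint y \<le> \<bar>y - of_int k\<bar>"
  unfolding dnint_def by (rule round_diff_minimal)

lemma dnint_nonneg: "0 \<le> dnint y" unfolding dnint_def by simp

lemma dnint_pos_iff: "0 < dnint y \<longleftrightarrow> y \<notin> \<int>"
proof -
  have "dnint y = 0 \<longleftrightarrow> y \<in> \<int>"
    unfolding dnint_def by (metis Ints_cases Ints_of_int eq_iff_diff_eq_0 abs_0 abs_eq_0 round_of_int)
  then show ?thesis using dnint_nonneg[of y] by linarith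
qed

lemma good_at_iff:
  assumes "N \<ge> 1"
  shows "good_at \<phi> x N \<longleftrightarrow> (\<exists>q::int. 2 \<le> q \<and> real_of_int q \<le> \<phi> (real N) \<and>
     0 < dnint (x * of_int q) \<and> dnint (x * of_int q) \<le> 1 / of_int q ^ N)"
proof -
  have key: "(real N \<le> - ln d / ln (of_int q)) \<longleftrightarrow> (0 < d \<and> d \<le> 1 / of_int q ^ N)"
    if q: "2 \<le> q" and d: "0 \<le> d" for q :: int and d :: real
  proof -
    have lq: "0 < ln (real_of_int q)" using q by simp
    have qp: "0 < real_of_int q" using q by simp
    have "(real N \<le> - ln d / ln (of_int q)) \<longleftrightarrow> real N * ln (of_int q) \<le> - ln d"
      using lq by (metis minus_divide_left pos_le_divide_eq)
    also have "\<dots> \<longleftrightarrow> (0 < d \<and> d \<le> 1 / of_int q ^ N)"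
    proof (cases "d = 0")
      case True
      have "0 < real N * ln (real_of_int q)" using lq assms by simp
      then show ?thesis using True by simp
    next
      case False
      then have dp: "0 < d" using d by simp
      have "ln (1 / real_of_int q ^ N) = - (real N * ln (of_int q))"
        using qp by (simp add: ln_div ln_realpow)
      moreover have "d \<le> 1 / of_int q ^ N \<longleftrightarrow> ln d \<le> ln (1 / of_int q ^ N)"
        using dp qp by simp
      ultimately show ?thesis using dp by linarith
    qed
    finally show ?thesis .
  qed
  show ?thesis unfolding good_at_def using key dnint_nonneg by (meson)
qed

lemma dnint_rat_lb:
  assumes "b > 0" "0 < dnint (of_int a / of_int b * of_int q)"
  shows "1 / of_int b \<le> dnint (of_int a / of_int b * of_int q)"
proof -
  define m where "m = round (of_int a / of_int b * of_int q :: real)"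
  have bp: "(0::real) < of_int b" using assms by simp
  have e: "dnint (of_int a / of_int b * of_int q) = \<bar>of_int (a*q - m*b)\<bar> / of_int b"
    unfolding dnint_def m_def[symmetric] using bp by (simp add: field_simps)
  have "a*q - m*b \<noteq> 0"
  proof
    assume "a*q - m*b = 0"
    then have "real_of_int (a*q - m*b) = 0" by simp
    then show False using assms(2) e by simp
  qed
  then have "1 \<le> \<bar>real_of_int (a*q - m*b)\<bar>" by linarith
  then show ?thesis unfolding e using bp by (simp add: divide_right_mono)
qed

lemma eventually_good_Liouville:
  assumes g: "\<forall>N\<ge>N0. \<exists>q::int. 2 \<le> q \<and> 0 < dnint (x * of_int q) \<and> dnint (x * of_int q) \<le> 1 / of_int q ^ N"
  shows "x \<in> Liouville_set"
proof -
  have irr: "x \<notin> \<rat>"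
  proof
    assume "x \<in> \<rat>"
    then obtain a b :: int where b: "b > 0" and x: "x = of_int a / of_int b"
      by (metis Rats_cases')
    define N where "N = N0 + nat b"
    obtain q :: int where q: "2 \<le> q" "0 < dnint (x * of_int q)" "dnint (x * of_int q) \<le> 1 / of_int q ^ N"
      using g N_def by (meson le_add1)
    have "1 / of_int b \<le> dnint (x * of_int q)" using dnint_rat_lb[of b a q] b q x by simp
    also have "\<dots> \<le> 1 / of_int q ^ N" by (rule q(3))
    also have "\<dots> \<le> 1 / 2 ^ N" using q(1) by (simp add: frac_le power_mono)
    also have "\<dots> < 1 / of_int b"
    proof -
      have "real_of_int b \<le> real N" using N_def b by simp
      also have "\<dots> < 2 ^ N" by (rule of_nat_less_two_power)
      finally show ?thesis using b by (simp add: frac_less2)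
    qed
    finally show False by simp
  qed
  have inf: "infinite {real_of_int y / real_of_int z | (y::int) (z::int).
         z \<ge> 1 \<and> \<bar>x - real_of_int y / real_of_int z\<bar> \<le> (real_of_int z) powr (-\<eta>)}" if eta: "\<eta> > 0" for \<eta>
  proof
    let ?S = "{real_of_int y / real_of_int z | (y::int) (z::int).
         z \<ge> 1 \<and> \<bar>x - real_of_int y / real_of_int z\<bar> \<le> (real_of_int z) powr (-\<eta>)}"
    assume fin: "finite ?S"
    obtain d where d: "d > 0" "\<forall>s\<in>?S. s \<noteq> x \<longrightarrow> d \<le> dist x s"
      using finite_set_avoid[OF fin, of x] by blast
    obtain N1 :: nat where N1: "1 / d < N1" using reals_Archimedean2 by blast
    define N where "N = N0 + N1 + nat \<lceil>\<eta>\<rceil>"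
    obtain q :: int where q: "2 \<le> q" "0 < dnint (x * of_int q)" "dnint (x * of_int q) \<le> 1 / of_int q ^ N"
      using g N_def by (meson le_add1 le_add2 order_trans)
    define p where "p = round (x * of_int q)"
    have qp: "(0::real) < of_int q" using q by simp
    have dist_eq: "\<bar>x - of_int p / of_int q\<bar> = dnint (x * of_int q) / of_int q"
      unfolding dnint_def p_def using qp
      by (metis (no_types, opaque_lifting) abs_divide abs_of_pos diff_divide_distrib nonzero_mult_div_cancel_right order_less_irrefl)
    have le1: "dnint (x * of_int q) / of_int q \<le> 1 / of_int q ^ Suc N"
      using q(3) qp by (simp add: divide_right_mono field_simps)
    have "1 / real_of_int q ^ Suc N = real_of_int q powr (- real (Suc N))"
      using qp by (metis powr_minus_divide powr_realpow of_nat_Suc)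
    also have "\<dots> \<le> real_of_int q powr (-\<eta>)"
      using q(1) N_def by (intro powr_mono) (auto, linarith)
    finally have inS: "of_int p / of_int q \<in> ?S"
      using dist_eq le1 q(1) by force
    have ne: "of_int p / of_int q \<noteq> x" using irr by (metis Rats_divide Rats_of_int)
    have "\<bar>x - of_int p / of_int q\<bar> \<le> 1 / real_of_int q ^ Suc N" using dist_eq le1 by simp
    also have "\<dots> \<le> 1 / 2 ^ Suc N"
    proof -
      have "(2::real) ^ Suc N \<le> real_of_int q ^ Suc N" using q(1) by (intro power_mono) auto
      moreover have "0 < real_of_int q ^ Suc N * 2 ^ Suc N" using q(1) by (simp del: power_Suc)
      ultimately show ?thesis by (intro divide_left_mono) (auto simp del: power_Suc)
    qed
    also have "\<dots> < 1 / N1"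
    proof -
      have "real N1 \<le> real N" using N_def by simp
      also have "\<dots> < 2 ^ Suc N" using of_nat_less_two_power[of "Suc N", where 'a=real] by simp
      finally show ?thesis using N1 d by (smt (verit) divide_pos_pos frac_less2 of_nat_0_less_iff of_nat_le_0_iff)
    qed
    also have "\<dots> < d" using N1 d by (smt (verit) divide_less_eq mult.commute of_nat_0_le_iff pos_divide_less_eq)
    finally have "\<bar>x - of_int p / of_int q\<bar> < d" .
    moreover have "d \<le> dist x (of_int p / of_int q)" using d(2) inS ne by blast
    ultimately show False by (simp add: dist_real_def)
  qed
  show ?thesis unfolding Liouville_set_def using irr inf by blast
qed



lemma irr_mult_notint:
  assumes "\<zeta> \<notin> \<rat>" "q \<noteq> 0"
  shows "\<zeta> * real q \<notin> \<int>"
proof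
  assume "\<zeta> * real q \<in> \<int>"
  then have "\<zeta> * real q \<in> \<rat>" using Ints_subset_Rats by blast
  then have "\<zeta> * real q / real q \<in> \<rat>" by (rule Rats_divide) simp
  then show False using assms by simp
qed

locale zctx =
  fixes \<zeta> :: real and \<phi> :: "real \<Rightarrow> real"
  assumes irr: "\<zeta> \<notin> \<rat>" and good: "\<And>N. N \<ge> 1 \<Longrightarrow> good_at \<phi> \<zeta> N"
begin

definition W :: "nat \<Rightarrow> nat \<Rightarrow> bool" where
  "W N q \<longleftrightarrow> 2 \<le> q \<and> dnint (\<zeta> * real q) \<le> 1 / real q ^ N"

definition D :: "nat \<Rightarrow> nat" where "D N = (LEAST q. W N q)"

lemma exW: assumes "N \<ge> 1" shows "\<exists>q. W N q \<and> real q \<le> \<phi> (real N)"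
proof -
  obtain q :: int where q: "2 \<le> q" "real_of_int q \<le> \<phi> (real N)" "dnint (\<zeta> * of_int q) \<le> 1 / of_int q ^ N"
    using good[OF assms] good_at_iff[OF assms] by blast
  have e: "real (nat q) = real_of_int q" using q(1) by simp
  show ?thesis using q e unfolding W_def by (intro exI[of _ "nat q"]) auto
qed

lemma WD: "N \<ge> 1 \<Longrightarrow> W N (D N)"
  unfolding D_def using exW by (metis LeastI)

lemma D_le_phi: "N \<ge> 1 \<Longrightarrow> real (D N) \<le> \<phi> (real N)"
proof -
  assume "N \<ge> 1"
  then obtain q where "W N q" "real q \<le> \<phi> (real N)" using exW by blast
  then have "D N \<le> q" unfolding D_def by (simp add: Least_le)
  then show ?thesis using \<open>real q \<le> _\<close> by linarith
qed

lemma dpos: "2 \<le> q \<Longrightarrow> 0 < dnint (\<zeta> * real q)"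
  using irr_mult_notint[OF irr, of q] dnint_pos_iff by simp

lemma D_mono1: assumes "N \<ge> 1" shows "D N \<le> D (Suc N)"
proof -
  have w: "W (Suc N) (D (Suc N))" using WD by simp
  have "W N (D (Suc N))"
  proof -
    have q2: "2 \<le> D (Suc N)" using w W_def by simp
    have "1 / real (D (Suc N)) ^ Suc N \<le> 1 / real (D (Suc N)) ^ N"
      using q2 by (intro divide_left_mono power_increasing) auto
    then show ?thesis using w unfolding W_def by auto
  qed
  then show ?thesis unfolding D_def by (simp add: Least_le)
qed

lemma D_mono: assumes "N \<ge> 1" "N \<le> M" shows "D N \<le> D M"
  using assms(2)
proof (induction M rule: dec_induct)
  case base then show ?case by simp
next
  case (step m) then show ?case using D_mono1[of m] assms(1) by simp
qed

lemma D_unbounded: "\<exists>N\<ge>1. B < D N"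
proof (rule ccontr)
  assume "\<not> ?thesis"
  then have bd: "\<forall>N\<ge>1. D N \<le> B" by auto
  have "W 1 (D 1)" using WD by simp
  then have B2: "2 \<le> B" using bd W_def by fastforce
  define S where "S = (\<lambda>q. dnint (\<zeta> * real q)) ` {2..B}"
  have finS: "finite S" "S \<noteq> {}" using B2 S_def by auto
  have Spos: "0 < Min S" using finS dpos S_def by (simp add: Min_gr_iff)
  obtain N0 where N0: "(1/2::real) ^ N0 < Min S" using real_arch_pow_inv[OF Spos, of "1/2"] by auto
  define N where "N = Suc N0"
  have "(1/2::real) ^ N \<le> (1/2) ^ N0" unfolding N_def by simp
  with N0 have N: "(1/2::real) ^ N < Min S" by linarith
  have w: "W N (D N)" using WD N_def by simp
  have inr: "D N \<in> {2..B}" using w bd N_def W_def by auto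
  have "Min S \<le> dnint (\<zeta> * real (D N))" using finS inr S_def by (simp add: Min_le)
  also have "\<dots> \<le> 1 / real (D N) ^ N" using w W_def by simp
  also have "\<dots> \<le> 1 / 2 ^ N"
  proof -
    have "(2::real) ^ N \<le> real (D N) ^ N" using inr by (intro power_mono) auto
    moreover have "0 < real (D N) ^ N * 2 ^ N" using inr by simp
    ultimately show ?thesis by (intro divide_left_mono) auto
  qed
  also have "\<dots> = (1/2) ^ N" by (simp add: power_one_over)
  finally show False using N by simp
qed

lemma D_jump:
  assumes N1: "N \<ge> 1" and lt: "D N < D (Suc N)"
  shows "(2/3) * real (D N) ^ N \<le> real (D (Suc N))"
proof -
  define q where "q = D N"
  define q' where "q' = D (Suc N)"
  have wq: "W N q" using WD N1 q_def by simp
  have wq': "W (Suc N) q'" using WD q'_def by simp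
  have q2: "2 \<le> q" using wq W_def by simp
  have qq': "q < q'" using lt q_def q'_def by simp
  have nw: "\<not> W (Suc N) q" using qq' unfolding q'_def D_def using not_less_Least by blast
  define e where "e = \<zeta> * real q - of_int (round (\<zeta> * real q))"
  define e' where "e' = \<zeta> * real q' - of_int (round (\<zeta> * real q'))"
  define p where "p = round (\<zeta> * real q)"
  define p' where "p' = round (\<zeta> * real q')"
  have ae: "\<bar>e\<bar> = dnint (\<zeta> * real q)" unfolding e_def dnint_def by simp
  have ae': "\<bar>e'\<bar> = dnint (\<zeta> * real q')" unfolding e'_def dnint_def by simp
  have Rq: "(2::real) \<le> real q" "real q < real q'" using q2 qq' by auto
  have e_big: "1 / real q ^ Suc N < \<bar>e\<bar>" using nw q2 ae unfolding W_def by auto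
  have e_le: "\<bar>e\<bar> \<le> 1 / real q ^ N" using wq ae W_def by simp
  have e'_le: "\<bar>e'\<bar> \<le> 1 / real q' ^ Suc N" using wq' ae' W_def by simp
  have lin: "real_of_int (p * int q' - p' * int q) = e' * real q - e * real q'"
    unfolding e_def e'_def p_def p'_def by (simp add: algebra_simps)
  have ne: "p * int q' - p' * int q \<noteq> 0"
  proof
    assume "p * int q' - p' * int q = 0"
    then have "e' * real q = e * real q'" using lin by simp
    then have "\<bar>e'\<bar> * real q = \<bar>e\<bar> * real q'" by (metis abs_mult abs_of_nat)
    moreover have "\<bar>e\<bar> * real q < \<bar>e\<bar> * real q'" using Rq e_big
      by (smt (verit) divide_pos_pos mult_strict_left_mono zero_less_power)
    ultimately have "\<bar>e\<bar> < \<bar>e'\<bar>" using Rq by (smt (verit) mult_right_mono)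
    moreover have "1 / real q' ^ Suc N < 1 / real q ^ Suc N"
      using Rq by (intro divide_strict_left_mono power_strict_mono) auto
    ultimately show False using e_big e'_le by linarith
  qed
  then have "1 \<le> \<bar>p * int q' - p' * int q\<bar>" by linarith
  then have "(1::real) \<le> \<bar>real_of_int (p * int q' - p' * int q)\<bar>" by (metis of_int_1_le_iff of_int_abs)
  then have "1 \<le> \<bar>e' * real q - e * real q'\<bar>" using lin by simp
  also have "\<dots> \<le> \<bar>e'\<bar> * real q + \<bar>e\<bar> * real q'" by (simp add: abs_mult abs_triangle_ineq4[THEN order_trans])
  also have "\<bar>e'\<bar> * real q \<le> 1/3"
  proof -
    have "\<bar>e'\<bar> * real q \<le> real q / real q' ^ Suc N" using e'_le Rq by (simp add: mult_right_mono divide_simps)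
    also have "\<dots> \<le> real q' / real q' ^ Suc N" using Rq by (intro divide_right_mono) auto
    also have "\<dots> = 1 / real q' ^ N" using Rq by simp
    also have "\<dots> \<le> 1 / real q'" using Rq N1
      by (intro divide_left_mono) (auto intro: order_trans[OF _ power_increasing[of 1 N]])
    also have "\<dots> \<le> 1/3" using q2 qq' by simp
    finally show ?thesis .
  qed
  finally have "2/3 \<le> \<bar>e\<bar> * real q'" by simp
  also have "\<dots> \<le> real q' / real q ^ N" using e_le Rq by (simp add: mult_right_mono divide_simps)
  finally have "2/3 \<le> real q' / real q ^ N" .
  then show ?thesis using Rq unfolding q_def q'_def by (simp add: field_simps)
qed

lemma room:
  assumes b: "2 \<le> b"
  shows "\<exists>L. n < L \<and> 4 \<le> L \<and> real_of_int (2*b^L + 2*b) \<le> \<phi> (real (Suc L))"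
proof -
  obtain N1 where N1: "N1 \<ge> 1" "nat (2*b) < D N1" using D_unbounded by blast
  define N where "N = N1 + n + 4"
  have DN: "real_of_int (2*b) \<le> real (D N)"
    using D_mono[of N1 N] N1 N_def b by simp
  have "\<exists>L\<ge>N. D L < D (Suc L)"
  proof (rule ccontr)
    assume "\<not> ?thesis"
    then have st: "\<forall>L\<ge>N. D (Suc L) \<le> D L" by auto
    have eq: "D L = D N" if "L \<ge> N" for L
      using that
    proof (induction L rule: dec_induct)
      case base then show ?case by simp
    next
      case (step m) then show ?case using st D_mono1[of m] N_def by fastforce
    qed
    obtain M where M: "M \<ge> 1" "D N < D M" using D_unbounded by blast
    show False
    proof (cases "M \<le> N")
      case True then show False using D_mono[of M N] M by simp
    next
      case False then show False using eq[of M] M by simp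
    qed
  qed
  then obtain L where L: "L \<ge> N" "D L < D (Suc L)" by blast
  have L4: "4 \<le> L" "n < L" "L \<ge> 1" using L N_def by auto
  have DL: "real_of_int (2*b) \<le> real (D L)" using D_mono[of N L] L N_def DN by simp
  have "real_of_int (2*b^L + 2*b) \<le> 10 * real_of_int b ^ L"
  proof -
    have "b \<le> b ^ L" using b L4 by (simp add: self_le_power)
    then have h: "real_of_int b \<le> real_of_int b ^ L" by (metis of_int_le_iff of_int_power)
    have "real_of_int (2*b^L + 2*b) = 2*real_of_int b ^ L + 2*real_of_int b" by simp
    moreover have "(2::real) \<le> real_of_int b" using b by simp
    ultimately show ?thesis using h by linarith
  qed
  also have "\<dots> \<le> (2/3) * (2 ^ L * real_of_int b ^ L)"
  proof -
    have "(16::real) \<le> 2 ^ L" using power_increasing[of 4 L "2::real"] L4 by simp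
    then show ?thesis using b by (simp add: mult_right_mono)
  qed
  also have "\<dots> = (2/3) * real_of_int (2*b) ^ L" by (simp add: power_mult_distrib)
  also have "\<dots> \<le> (2/3) * real (D L) ^ L" using DL b by (intro mult_left_mono power_mono) auto
  also have "\<dots> \<le> real (D (Suc L))" using D_jump L L4 by simp
  also have "\<dots> \<le> \<phi> (real (Suc L))" using D_le_phi[of "Suc L"] by simp
  finally show ?thesis using L4 by blast
qed

end


lemma coprime_from_det: "a'*b - a*(b'::int) = 1 \<Longrightarrow> coprime a' b'"
proof (rule coprimeI)
  fix c assume h: "a'*b - a*b' = 1" "c dvd a'" "c dvd b'"
  have "c dvd a'*b - a*b'" by (rule dvd_diff[OF dvd_mult2[OF h(2)] dvd_mult[OF h(3)]])
  then have "c dvd 1" by (simp only: h(1))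
  then show "is_unit c" by simp
qed

locale constr =
  fixes F :: "nat \<Rightarrow> real" and a0 b0 :: int and n0 :: nat
  assumes mono: "\<And>N M. 2 \<le> N \<Longrightarrow> N \<le> M \<Longrightarrow> F N \<le> F M"
  and room: "\<And>b n. 2 \<le> b \<Longrightarrow> \<exists>L. n < L \<and> 4 \<le> L \<and> real_of_int (2*b^L + 2*b) \<le> F (Suc L)"
  and b0: "2 \<le> b0" and cop: "coprime a0 b0" and n0: "1 \<le> n0"
  and b0F: "\<And>N. n0 \<le> N \<Longrightarrow> real_of_int b0 \<le> F N"
begin

definition Lch :: "int \<Rightarrow> nat \<Rightarrow> nat" where
  "Lch b Lp = (SOME L. Lp < L \<and> 4 \<le> L \<and> real_of_int (2*b^L + 2*b) \<le> F (Suc L))"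

definition bb :: "int \<Rightarrow> int \<Rightarrow> nat \<Rightarrow> int" where
  "bb a b Lp = 2*b^(Lch b Lp) + ((SOME v. (b dvd a * v + 1)) - 2*b^(Lch b Lp)) mod b"

definition stp :: "int \<times> int \<times> nat \<Rightarrow> bool \<Rightarrow> int \<times> int \<times> nat" where
  "stp st c = (case st of (a, b, Lp) \<Rightarrow>
     ((1 + a * (bb a b Lp + (if c then b else 0))) div b, bb a b Lp + (if c then b else 0), Lch b Lp))"

primrec sq :: "(nat \<Rightarrow> bool) \<Rightarrow> nat \<Rightarrow> int \<times> int \<times> nat" where
  "sq s 0 = (a0, b0, n0 - 1)"
| "sq s (Suc k) = stp (sq s k) (s k)"

lemma stp_props:
  assumes cp: "coprime a b" and b2: "2 \<le> b" and eq: "stp (a, b, Lp) c = (a', b', L)"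
  shows "Lp < L \<and> 4 \<le> L \<and> real_of_int (2*b^L + 2*b) \<le> F (Suc L) \<and> 2*b^L \<le> b' \<and> b' < 2*b^L + 2*b \<and> a'*b - a*b' = 1"
proof -
  have L: "L = Lch b Lp" using eq unfolding stp_def by simp
  have Lp: "Lp < L \<and> 4 \<le> L \<and> real_of_int (2*b^L + 2*b) \<le> F (Suc L)"
    unfolding L Lch_def using room[OF b2, of Lp] by (rule someI_ex)
  have "\<exists>v. b dvd a * v + 1"
  proof -
    obtain u w where "u * a + w * b = gcd a b" using bezout_int by blast
    then have "u * a + w * b = 1" using cp by simp
    then have "a * (-u) + 1 = b * w" by (simp add: algebra_simps)
    then show ?thesis by (metis dvd_triv_left)
  qed
  then have vdef: "b dvd a * (SOME v. (b dvd a * v + 1)) + 1" by (rule someI_ex)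
  define v where "v = (SOME v. (b dvd a * v + 1))"
  define t where "t = (if c then 1 else (0::int))"
  have bbe: "bb a b Lp = 2*b^L + (v - 2*b^L) mod b" unfolding bb_def v_def L by simp
  have b': "b' = bb a b Lp + b * t" using eq unfolding stp_def t_def by auto
  have a': "a' = (1 + a * b') div b" using eq b' unfolding stp_def t_def by (cases c) auto
  have m1: "0 \<le> (v - 2*b^L) mod b" "(v - 2*b^L) mod b < b" using b2 by auto
  have t01: "0 \<le> b * t" "b * t \<le> b" using b2 t_def by auto
  have lo: "2*b^L \<le> b'" using b' bbe m1 t01 by linarith
  have hi: "b' < 2*b^L + 2*b" using b' bbe m1 t01 by linarith
  have "b' = v - b * ((v - 2*b^L) div b) + b * t" using b' bbe by (simp add: mod_div_decomp algebra_simps minus_div_mult_eq_mod[symmetric])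
  then have "1 + a*b' = 1 + a * (v - b * ((v - 2*b^L) div b) + b * t)" by simp
  also have "\<dots> = (a * v + 1) + b * (a*t - a*((v - 2*b^L) div b))" by (simp add: algebra_simps)
  finally have "1 + a*b' = (a * v + 1) + b * (a*t - a*((v - 2*b^L) div b))" .
  moreover have "b dvd (a * v + 1) + b * (a*t - a*((v - 2*b^L) div b))" using vdef v_def by simp
  ultimately have "b dvd 1 + a*b'" by (simp only:)
  then have "a' * b = 1 + a*b'" using a' by simp
  then have "a'*b - a*b' = 1" by simp
  then show ?thesis using Lp lo hi by simp
qed

lemma stp_branch: "stp (a, b, Lp) True = (fst (stp (a,b,Lp) False) + a, fst (snd (stp (a,b,Lp) False)) + b, snd (snd (stp (a,b,Lp) False)))"
  if "b \<noteq> 0"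
proof -
  have "(1 + a * (bb a b Lp + b)) div b = (1 + a * bb a b Lp + a * b) div b" by (simp add: algebra_simps)
  also have "\<dots> = (1 + a * bb a b Lp) div b + a" using that by simp
  finally show ?thesis unfolding stp_def by simp
qed

abbreviation A where "A s k \<equiv> fst (sq s k)"
abbreviation B where "B s k \<equiv> fst (snd (sq s k))"
abbreviation P where "P s k \<equiv> snd (snd (sq s k))"

lemma sq_eq: "sq s k = (A s k, B s k, P s k)" by simp

lemma inv: "coprime (A s k) (B s k) \<and> 2 \<le> B s k \<and> (\<forall>N. P s k < N \<longrightarrow> real_of_int (B s k) \<le> F N)"
proof (induction k)
  case 0
  show ?case using cop b0 b0F n0 by auto
next
  case (Suc k)
  have e: "stp (A s k, B s k, P s k) (s k) = (A s (Suc k), B s (Suc k), P s (Suc k))"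
    by (metis sq.simps(2) sq_eq)
  note pr = stp_props[OF _ _ e] Suc
  have cop': "coprime (A s (Suc k)) (B s (Suc k))" using pr coprime_from_det by blast
  have "1 \<le> B s k ^ P s (Suc k)" using pr by simp
  then have b2: "2 \<le> B s (Suc k)" using pr by linarith
  have bF: "real_of_int (B s (Suc k)) \<le> F (Suc (P s (Suc k)))"
  proof -
    have "B s (Suc k) \<le> 2 * B s k ^ P s (Suc k) + 2 * B s k" using pr by linarith
    then have "real_of_int (B s (Suc k)) \<le> real_of_int (2 * B s k ^ P s (Suc k) + 2 * B s k)" by linarith
    then show ?thesis using pr by linarith
  qed
  have "\<forall>N. P s (Suc k) < N \<longrightarrow> real_of_int (B s (Suc k)) \<le> F N"
  proof (intro allI impI)
    fix N assume "P s (Suc k) < N"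
    then have "F (Suc (P s (Suc k))) \<le> F N" using pr by (intro mono) auto
    then show "real_of_int (B s (Suc k)) \<le> F N" using bF by linarith
  qed
  then show ?case using cop' b2 by blast
qed

lemma stepk: "P s k < P s (Suc k) \<and> 4 \<le> P s (Suc k) \<and> 2 * B s k ^ P s (Suc k) \<le> B s (Suc k)
   \<and> A s (Suc k) * B s k - A s k * B s (Suc k) = 1"
proof -
  have e: "stp (A s k, B s k, P s k) (s k) = (A s (Suc k), B s (Suc k), P s (Suc k))"
    by (metis sq.simps(2) sq_eq)
  show ?thesis using stp_props[OF _ _ e] inv[of s k] by blast
qed

lemma Bgrow: "16 * B s k \<le> B s (Suc k)"
proof -
  have s: "4 \<le> P s (Suc k)" "2 * B s k ^ P s (Suc k) \<le> B s (Suc k)" using stepk by auto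
  have b2: "2 \<le> B s k" using inv by blast
  have "B s k ^ 4 \<le> B s k ^ P s (Suc k)" using s b2 by (intro power_increasing) auto
  moreover have "8 * B s k \<le> B s k ^ 4"
  proof -
    have "(8::int) \<le> B s k ^ 3" using power_mono[of 2 "B s k" 3] b2 by simp
    then have "8 * B s k \<le> B s k ^ 3 * B s k" using b2 by (intro mult_right_mono) auto
    then show ?thesis by (simp add: power_Suc2[symmetric] del: power_Suc)
  qed
  ultimately show ?thesis using s by linarith
qed

definition r where "r s k = real_of_int (A s k) / real_of_int (B s k)"
definition e where "e s k = 1 / (real_of_int (B s k) * real_of_int (B s (Suc k)))"
definition u where "u s k = r s k + 2 * e s k"

lemma Bpos: "(2::real) \<le> real_of_int (B s k)" using inv[of s k] by simp

lemma r_step: "r s (Suc k) = r s k + e s k"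
proof -
  have d: "A s (Suc k) * B s k - A s k * B s (Suc k) = 1" using stepk by blast
  have d': "real_of_int (A s (Suc k)) * real_of_int (B s k) - real_of_int (A s k) * real_of_int (B s (Suc k)) = 1"
    using d by (metis of_int_1 of_int_diff of_int_mult)
  have p1: "real_of_int (B s k) \<noteq> 0" "real_of_int (B s (Suc k)) \<noteq> 0" using Bpos[of s k] Bpos[of s "Suc k"] by auto
  show ?thesis unfolding r_def e_def using p1 d' by (simp add: field_simps)
qed

lemma e_pos: "0 < e s k" unfolding e_def using Bpos[of s k] Bpos[of s "Suc k"] by simp

lemma e_dec: "16 * e s (Suc k) \<le> e s k"
proof -
  define b where "b = real_of_int (B s k)"
  define b' where "b' = real_of_int (B s (Suc k))"
  define b'' where "b'' = real_of_int (B s (Suc (Suc k)))"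
  have g: "16 * b' \<le> b''" unfolding b'_def b''_def
    using Bgrow[of s "Suc k"] by (metis of_int_le_iff of_int_mult of_int_numeral)
  have g2: "b \<le> b'" unfolding b_def b'_def using Bgrow[of s k] inv[of s k] by simp
  have p: "0 < b" "0 < b'" unfolding b_def b'_def using Bpos[of s k] Bpos[of s "Suc k"] by auto
  have "16 * b \<le> b''" using g g2 by linarith
  then have h: "b' * (16 * b) \<le> b' * b''" using p by (intro mult_left_mono) auto
  have "16 * e s (Suc k) = 16 / (b' * b'')" unfolding e_def b'_def b''_def by simp
  also have "\<dots> \<le> 16 / (b' * (16 * b))" using h p by (intro divide_left_mono) auto
  also have "\<dots> = 1 / (b * b')" using p by simp
  also have "\<dots> = e s k" unfolding e_def b_def b'_def by simp
  finally show ?thesis .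
qed

lemma r_inc: "incseq (r s)"
  by (rule incseq_SucI) (simp add: r_step less_imp_le e_pos)

lemma u_dec: "u s (Suc k) \<le> u s k"
  unfolding u_def using r_step[of s k] e_dec[of s k] e_pos[of s "Suc k"] by simp

lemma u_decseq: "decseq (u s)" by (rule decseq_SucI) (rule u_dec)

lemma r_le_u: "r s k \<le> u s j"
proof (cases "k \<le> j")
  case True
  then have "r s k \<le> r s j" using r_inc by (simp add: incseq_def)
  then show ?thesis unfolding u_def using e_pos[of s j] by simp
next
  case False
  then have "u s k \<le> u s j" using u_decseq by (simp add: decseq_def)
  then show ?thesis unfolding u_def using e_pos[of s k] by simp
qed

definition x where "x s = lim (r s)"

lemma x_lim: "r s \<longlonglongrightarrow> x s"
proof -
  obtain L where "r s \<longlonglongrightarrow> L" using incseq_convergent[OF r_inc, of s "u s 0"] r_le_u by metis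
  then show ?thesis unfolding x_def by (simp add: limI)
qed

lemma x_ge: "r s k \<le> x s"
  using incseq_le[OF r_inc x_lim] by blast

lemma x_le: "x s \<le> u s j"
  by (rule LIMSEQ_le_const2[OF x_lim]) (use r_le_u in blast)

lemma x_gt: "r s k < x s"
  using x_ge[of s "Suc k"] r_step[of s k] e_pos[of s k] by simp

lemma level:
  assumes "P s k < N" "N \<le> P s (Suc k)"
  shows "\<exists>q::int. 2 \<le> q \<and> real_of_int q \<le> F N \<and> 0 < dnint (x s * of_int q) \<and> dnint (x s * of_int q) \<le> 1 / of_int q ^ N"
proof -
  define b where "b = real_of_int (B s k)"
  define b' where "b' = real_of_int (B s (Suc k))"
  define L where "L = P s (Suc k)"
  have b2: "2 \<le> b" using Bpos b_def by simp
  have bb': "2 * b ^ L \<le> b'" using stepk[of s k] unfolding b_def b'_def L_def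
    by (metis of_int_le_iff of_int_mult of_int_numeral of_int_power)
  define y where "y = x s * b - real_of_int (A s k)"
  have y_eq: "y = b * (x s - r s k)" unfolding y_def r_def b_def using b2 b_def by (simp add: field_simps)
  have ypos: "0 < y" using y_eq x_gt[of s k] b2 by simp
  have "y \<le> b * (2 * e s k)" unfolding y_eq using x_le[of s k] b2 unfolding u_def by simp
  also have "\<dots> = 2 / b'" unfolding e_def b_def b'_def using b2 b_def by (simp add: field_simps)
  also have "\<dots> \<le> 2 / (2 * b ^ L)"
  proof -
    have bLp: "0 < b ^ L" using b2 by simp
    then have b'p: "0 < b'" using bb' by linarith
    show ?thesis using bb' bLp b'p by (intro divide_left_mono) auto
  qed
  also have "\<dots> = 1 / b ^ L" by simp
  finally have yle: "y \<le> 1 / b ^ L" .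
  have "1 / b ^ L \<le> 1 / b ^ N" using b2 assms(2) L_def by (intro divide_left_mono power_increasing) auto
  with yle have y1: "y \<le> 1 / b ^ N" by simp
  have "1 < b ^ N" using b2 assms(1) by (intro one_less_power) auto
  then have "1 / b ^ N < 1" by simp
  with y1 have ylt1: "y < 1" by simp
  have d1: "dnint (x s * b) \<le> y" using dnint_le[of "x s * b" "A s k"] ypos unfolding y_def by simp
  have "x s * b \<notin> \<int>"
  proof
    assume "x s * b \<in> \<int>"
    then have "y \<in> \<int>" unfolding y_def by simp
    then obtain m where "y = of_int m" by (auto elim: Ints_cases)
    then show False using ypos ylt1 by simp
  qed
  then have d0: "0 < dnint (x s * b)" using dnint_pos_iff by simp
  have "2 \<le> B s k" using inv by blast
  moreover have "real_of_int (B s k) \<le> F N" using inv assms(1) by blast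
  ultimately show ?thesis using d0 d1 y1 b_def by (intro exI[of _ "B s k"]) auto
qed

lemma P_ge: "k \<le> P s k"
proof (induction k)
  case 0 then show ?case by simp
next
  case (Suc k) then show ?case using stepk[of s k] by simp
qed

lemma cover:
  assumes "n0 \<le> N"
  shows "\<exists>k. P s k < N \<and> N \<le> P s (Suc k)"
proof -
  have ex: "\<exists>k. N \<le> P s (Suc k)" using P_ge[of "Suc N" s] by (intro exI[of _ N]) simp
  define k where "k = (LEAST k. N \<le> P s (Suc k))"
  have k1: "N \<le> P s (Suc k)" unfolding k_def using ex by (rule LeastI_ex)
  have "P s k < N"
  proof (cases k)
    case 0 then show ?thesis using assms n0 by simp
  next
    case (Suc j)
    then have "j < k" by simp
    then have "\<not> N \<le> P s (Suc j)" unfolding k_def using not_less_Least by blast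
    then show ?thesis using Suc by simp
  qed
  then show ?thesis using k1 by blast
qed

lemma x_good:
  assumes "n0 \<le> N"
  shows "\<exists>q::int. 2 \<le> q \<and> real_of_int q \<le> F N \<and> 0 < dnint (x s * of_int q) \<and> dnint (x s * of_int q) \<le> 1 / of_int q ^ N"
  using cover[OF assms, of s] level by blast

lemma x_close: "\<bar>x s - real_of_int a0 / real_of_int b0\<bar> \<le> 1 / 2 ^ n0"
proof -
  have r0: "r s 0 = real_of_int a0 / real_of_int b0" unfolding r_def by simp
  have "0 \<le> x s - r s 0" using x_ge[of s 0] by simp
  moreover have "x s - r s 0 \<le> 2 * e s 0" using x_le[of s 0] unfolding u_def by simp
  moreover have "2 * e s 0 \<le> 1 / 2 ^ n0"
  proof -
    define b where "b = real_of_int b0"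
    define b' where "b' = real_of_int (B s 1)"
    define L where "L = P s 1"
    have b2: "2 \<le> b" using b0 b_def by simp
    have i: "2 * b0 ^ L \<le> B s 1" using stepk[of s 0] unfolding L_def by simp
    have bb': "2 * b ^ L \<le> b'" unfolding b_def b'_def using i
      by (metis of_int_le_iff of_int_mult of_int_numeral of_int_power)
    have "n0 - 1 < L" using stepk[of s 0] unfolding L_def by simp
    then have Ln: "n0 \<le> L" using n0 by linarith
    have "2 * e s 0 = 2 / (b * b')" unfolding e_def b_def b'_def by simp
    also have "\<dots> \<le> 2 / (b * (2 * b ^ L))"
    proof -
      have bLp: "0 < b ^ L" using b2 by simp
      then have b'p: "0 < b'" using bb' by linarith
      have "b * (2 * b ^ L) \<le> b * b'" using bb' b2 by (intro mult_left_mono) auto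
      moreover have "0 < b * (2 * b ^ L)" using bLp b2 by simp
      ultimately show ?thesis by (intro divide_left_mono) auto
    qed
    also have "\<dots> = 1 / (b * b ^ L)" using b2 by simp
    also have "\<dots> \<le> 1 / b ^ L" using b2 by (intro divide_left_mono) (auto simp: mult_pos_pos)
    also have "\<dots> \<le> 1 / 2 ^ L" using b2 by (intro divide_left_mono power_mono) auto
    also have "\<dots> \<le> 1 / 2 ^ n0" using Ln by (intro divide_left_mono power_increasing) auto
    finally show ?thesis .
  qed
  ultimately show ?thesis using r0 by simp
qed

lemma x_inj_aux:
  assumes eq: "sq s k = sq s' k" and sk: "\<not> s k" and s'k: "s' k"
  shows "x s' < x s"
proof -
  define a where "a = A s k"
  define b where "b = B s k"
  define Lp where "Lp = P s k"
  have st: "sq s k = (a, b, Lp)" unfolding a_def b_def Lp_def by simp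
  have st': "sq s' k = (a, b, Lp)" using st eq by simp
  have bnz: "b \<noteq> 0" using inv[of s k] b_def by simp
  have S1: "sq s (Suc k) = stp (a,b,Lp) False" using st sk by simp
  have S2: "sq s' (Suc k) = stp (a,b,Lp) True" using st' s'k by simp
  have A2: "A s' (Suc k) = A s (Suc k) + a" and B2: "B s' (Suc k) = B s (Suc k) + b"
    using S1 S2 stp_branch[OF bnz, of a Lp] by auto
  define a' where "a' = real_of_int (A s (Suc k))"
  define b' where "b' = real_of_int (B s (Suc k))"
  define ra where "ra = real_of_int a"
  define rb where "rb = real_of_int b"
  have det: "a' * rb - ra * b' = 1"
    using stepk[of s k] unfolding a'_def b'_def ra_def rb_def a_def b_def
    by (metis of_int_1 of_int_diff of_int_mult)
  have rbp: "2 \<le> rb" using Bpos rb_def b_def by simp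
  have b'p: "2 \<le> b'" using Bpos[of s "Suc k"] unfolding b'_def by blast
  define b'' where "b'' = real_of_int (B s' (Suc (Suc k)))"
  have g: "16 * (b' + rb) \<le> b''"
    using Bgrow[of s' "Suc k"] B2 unfolding b''_def b'_def rb_def
    by (metis of_int_add of_int_le_iff of_int_mult of_int_numeral)
  have xs: "a' / b' \<le> x s" using x_ge[of s "Suc k"] unfolding r_def a'_def b'_def by simp
  have xs': "x s' \<le> (a' + ra) / (b' + rb) + 2 / ((b' + rb) * b'')"
    using x_le[of s' "Suc k"] unfolding u_def r_def e_def A2 B2 a'_def b'_def ra_def rb_def b''_def by simp
  have Xp: "0 < b' + rb" using rbp b'p by simp
  have "a' / b' - (a' + ra) / (b' + rb) = (a' * (b' + rb) - (a' + ra) * b') / (b' * (b' + rb))"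
    using rbp b'p by (simp add: diff_frac_eq)
  also have "a' * (b' + rb) - (a' + ra) * b' = a' * rb - ra * b'" by (simp add: algebra_simps)
  finally have diff: "a' / b' - (a' + ra) / (b' + rb) = 1 / (b' * (b' + rb))" using det by simp
  have "2 / ((b' + rb) * b'') < 1 / (b' * (b' + rb))"
  proof -
    have "16 * (b' + rb) = 16 * b' + 16 * rb" by (simp add: distrib_left)
    then have lt: "2 * b' < b''" using g rbp b'p by linarith
    have "2 / b'' < 2 / (2 * b')" using lt b'p by (intro divide_strict_left_mono) auto
    then have h1: "2 / b'' < 1 / b'" by simp
    have "2 / ((b' + rb) * b'') = (2 / b'') / (b' + rb)" by simp
    moreover have "1 / (b' * (b' + rb)) = (1 / b') / (b' + rb)" by simp
    ultimately show ?thesis using divide_strict_right_mono[OF h1 Xp] by (simp add: mult.commute)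
  qed
  then show ?thesis using xs xs' diff by linarith
qed

lemma x_inj: "inj x"
proof (rule injI)
  fix s s' assume xe: "x s = x s'"
  show "s = s'"
  proof (rule ccontr)
    assume "s \<noteq> s'"
    then have "\<exists>k. s k \<noteq> s' k" by auto
    define k where "k = (LEAST k. s k \<noteq> s' k)"
    have kd: "s k \<noteq> s' k" unfolding k_def using \<open>\<exists>k. _\<close> by (rule LeastI_ex)
    have before: "\<And>i. i < k \<Longrightarrow> s i = s' i" unfolding k_def using not_less_Least by blast
    have "sq s i = sq s' i" if "i \<le> k" for i
      using that
    proof (induction i)
      case 0 then show ?case by simp
    next
      case (Suc i) then show ?case using before[of i] by simp
    qed
    then have eq: "sq s k = sq s' k" by simp
    show False
    proof (cases "s k")
      case True
      then have "x s < x s'" using x_inj_aux[of s' k s] eq kd by simp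
      then show False using xe by simp
    next
      case False
      then have "x s' < x s" using x_inj_aux[of s k s'] eq kd by simp
      then show False using xe by simp
    qed
  qed
qed

end


theorem proposition3p6:
  fixes \<phi> :: "real \<Rightarrow> real"
  assumes "\<phi> \<in> PhiClass"
    and "L_phi \<phi> \<noteq> {}"
  shows "uncountable (L_phi \<phi>) \<and>
         (\<forall>J :: real set. is_interval J \<and> open J \<and> J \<noteq> {} \<longrightarrow> uncountable (L_phi_star \<phi> \<inter> J))"
proof -
  obtain \<zeta> where z: "\<zeta> \<in> L_phi \<phi>" using assms(2) by blast
  have zL: "\<zeta> \<in> Liouville_set" and zg: "\<And>N. N \<ge> 1 \<Longrightarrow> good_at \<phi> \<zeta> N"
    using z unfolding L_phi_def by auto
  have zirr: "\<zeta> \<notin> \<rat>" using zL unfolding Liouville_set_def by auto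
  interpret Z: zctx \<zeta> \<phi> using zirr zg by unfold_locales auto
  have ph2: "\<And>y. y \<ge> 2 \<Longrightarrow> \<phi> y \<ge> 2" and phm: "mono_on {2..} \<phi>" and phl: "filterlim \<phi> at_top at_top"
    using assms(1) unfolding PhiClass_def by auto
  define F where "F N = \<phi> (real N)" for N :: nat
  have monoF: "\<And>N M. 2 \<le> N \<Longrightarrow> N \<le> M \<Longrightarrow> F N \<le> F M"
    unfolding F_def using phm by (intro mono_onD[OF phm]) auto
  have roomF: "\<And>b n. 2 \<le> b \<Longrightarrow> \<exists>L. n < L \<and> 4 \<le> L \<and> real_of_int (2*b^L + 2*b) \<le> F (Suc L)"
    unfolding F_def using Z.room by blast
  have good_conv: "good_at \<phi> y N"
    if "N \<ge> 1" "\<exists>q::int. 2 \<le> q \<and> real_of_int q \<le> F N \<and> 0 < dnint (y * of_int q) \<and> dnint (y * of_int q) \<le> 1 / of_int q ^ N" for y N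
    using that good_at_iff[OF that(1)] unfolding F_def by blast
  have Lv: "y \<in> Liouville_set"
    if "\<And>N. n \<le> N \<Longrightarrow> \<exists>q::int. 2 \<le> q \<and> real_of_int q \<le> F N \<and> 0 < dnint (y * of_int q) \<and> dnint (y * of_int q) \<le> 1 / of_int q ^ N" for y n
    by (rule eventually_good_Liouville[of n]) (use that in blast)
  have F1: "2 \<le> F N" if "1 \<le> N" for N
  proof (cases "N = 1")
    case True
    obtain q :: int where "2 \<le> q" "real_of_int q \<le> \<phi> 1"
      using zg[of 1] good_at_iff[of 1] by auto
    then show ?thesis using True F_def by simp
  next
    case False then show ?thesis using that ph2 F_def by simp
  qed
  interpret C1: constr F 1 2 1 using monoF roomF F1 by unfold_locales auto
  have p1: "uncountable (L_phi \<phi>)"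
  proof
    assume c: "countable (L_phi \<phi>)"
    have "range C1.x \<subseteq> L_phi \<phi>"
    proof
      fix y assume "y \<in> range C1.x"
      then obtain s where y: "y = C1.x s" by auto
      have g: "\<And>N. 1 \<le> N \<Longrightarrow> \<exists>q::int. 2 \<le> q \<and> real_of_int q \<le> F N \<and> 0 < dnint (y * of_int q) \<and> dnint (y * of_int q) \<le> 1 / of_int q ^ N"
        using C1.x_good y by blast
      show "y \<in> L_phi \<phi>" unfolding L_phi_def using Lv[OF g] g good_conv by blast
    qed
    then have "countable (range C1.x)" using c countable_subset by blast
    then have "countable (UNIV :: (nat \<Rightarrow> bool) set)"
      using countable_image_inj_on C1.x_inj by blast
    then show False using uncountable_nat_bool by blast
  qed
  have p2: "uncountable (L_phi_star \<phi> \<inter> J)" if J: "open J" "J \<noteq> {}" for J :: "real set"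
  proof
    assume c: "countable (L_phi_star \<phi> \<inter> J)"
    obtain cc where cc: "cc \<in> J" using J by blast
    obtain \<delta> where d: "\<delta> > 0" "ball cc \<delta> \<subseteq> J" using J(1) cc open_contains_ball by blast
    obtain m where m: "(1/2::real) ^ m < \<delta> / 2" using real_arch_pow_inv[of "\<delta>/2" "1/2"] d by auto
    define K :: int where "K = 2 ^ m"
    define t where "t = \<lfloor>cc * real_of_int K\<rfloor>"
    define a0 where "a0 = 2 * t + 1"
    define b0 where "b0 = 2 * K"
    have Kp: "(1::real) \<le> real_of_int K" unfolding K_def by simp
    have Kinv: "1 / real_of_int K < \<delta> / 2" using m unfolding K_def by (simp add: power_one_over)
    have b02: "2 \<le> b0" unfolding b0_def K_def by simp
    have cop: "coprime a0 b0" unfolding a0_def b0_def K_def by simp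
    have near0: "\<bar>cc - real_of_int a0 / real_of_int b0\<bar> \<le> 1 / real_of_int K"
    proof -
      have t1: "real_of_int t \<le> cc * real_of_int K" "cc * real_of_int K < real_of_int t + 1"
        unfolding t_def by linarith+
      have eq: "real_of_int a0 / real_of_int b0 = (real_of_int t + 1/2) / real_of_int K"
        unfolding a0_def b0_def using Kp by (simp add: field_simps)
      have "cc = (cc * real_of_int K) / real_of_int K" using Kp by simp
      then have "cc - real_of_int a0 / real_of_int b0 = (cc * real_of_int K - (real_of_int t + 1/2)) / real_of_int K"
        using eq by (metis diff_divide_distrib)
      moreover have "\<bar>cc * real_of_int K - (real_of_int t + 1/2)\<bar> \<le> 1" using t1 by linarith
      ultimately show ?thesis using Kp by (simp add: abs_divide divide_right_mono)
    qed
    obtain Y where Y: "\<forall>y\<ge>Y. real_of_int b0 \<le> \<phi> y"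
      using phl unfolding filterlim_at_top eventually_at_top_linorder by blast
    obtain m2 where m2: "(1/2::real) ^ m2 < \<delta> / 2" using m by blast
    define n0 where "n0 = nat \<lceil>Y\<rceil> + m + 1"
    have n01: "1 \<le> n0" unfolding n0_def by simp
    have bF: "real_of_int b0 \<le> F N" if "n0 \<le> N" for N
    proof -
      have "Y \<le> real N" using that unfolding n0_def by linarith
      then show ?thesis using Y F_def by simp
    qed
    have small: "1 / 2 ^ n0 \<le> (1/2::real) ^ m"
    proof -
      have "(1/2::real) ^ n0 \<le> (1/2) ^ m" unfolding n0_def by (intro power_decreasing) auto
      then show ?thesis by (simp add: power_one_over)
    qed
    interpret C2: constr F a0 b0 n0 using monoF roomF b02 cop n01 bF by unfold_locales auto
    have "range C2.x \<subseteq> L_phi_star \<phi> \<inter> J"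
    proof
      fix y assume "y \<in> range C2.x"
      then obtain s where y: "y = C2.x s" by auto
      have g: "\<And>N. n0 \<le> N \<Longrightarrow> \<exists>q::int. 2 \<le> q \<and> real_of_int q \<le> F N \<and> 0 < dnint (y * of_int q) \<and> dnint (y * of_int q) \<le> 1 / of_int q ^ N"
        using C2.x_good y by blast
      have gs: "\<forall>N\<ge>n0. good_at \<phi> y N" using g good_conv n01 by (meson order_trans)
      have "y \<in> L_phi_star \<phi>" unfolding L_phi_star_def using Lv[OF g] gs by blast
      moreover have "y \<in> J"
      proof -
        have "\<bar>y - real_of_int a0 / real_of_int b0\<bar> \<le> 1 / 2 ^ n0" using C2.x_close y by simp
        then have "\<bar>y - cc\<bar> < \<delta>" using near0 small m Kinv by linarith
        then show ?thesis using d(2) by (auto simp: dist_real_def ball_def abs_minus_commute)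
      qed
      ultimately show "y \<in> L_phi_star \<phi> \<inter> J" by blast
    qed
    then have "countable (range C2.x)" using c countable_subset by blast
    then have "countable (UNIV :: (nat \<Rightarrow> bool) set)"
      using countable_image_inj_on C2.x_inj by blast
    then show False using uncountable_nat_bool by blast
  qed
  show ?thesis using p1 p2 by blast
qed


end
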